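(* Let $q$ be a prime power and $GF(q)$ the finite field with $q$ elements. For every integer $n\ge 1$, the number of $n\times n$ upper-triangular matrices $X$ with entries in $GF(q)$ satisfying $X^2=0$ equals $C_n(q)$, where for $n\ge 0$ $$C_{2n}(q)=\sum_{j\in\mathbb{Z}}\left[\binom{2n}{n-3j}-\binom{2n}{n-3j-1}\right] q^{\,n^2-3j^2-j},$$ $$C_{2n+1}(q)=\sum_{j\in\mathbb{Z}}\left[\binom{2n+1}{n-3j}-\binom{2n+1}{n-3j-1}\right] q^{\,n^2+n-3j^2-2j}.$$
   Context: Ordinary binomial coefficients $\binom{N}{k}$ are taken to be $0$ when $k<0$ or $k>N$, so each sum over $j\in\mathbb{Z}$ has finitely many nonzero terms. *)

theory Defs
  imports Complex_Main
begin

definition binomZ :: "nat \<Rightarrow> int \<Rightarrow> int" where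
  "binomZ N k = (if 0 \<le> k \<and> k \<le> int N then int (N choose nat k) else 0)"

definition sumZ :: "(int \<Rightarrow> real) \<Rightarrow> real" where
  "sumZ f = (\<Sum>j\<in>{j. f j \<noteq> 0}. f j)"

definition C_even :: "nat \<Rightarrow> real \<Rightarrow> real" where
  "C_even n q = sumZ (\<lambda>j. real_of_int (binomZ (2*n) (int n - 3*j) - binomZ (2*n) (int n - 3*j - 1))
                          * q powi (int n ^ 2 - 3 * j ^ 2 - j))"

definition C_odd :: "nat \<Rightarrow> real \<Rightarrow> real" where
  "C_odd n q = sumZ (\<lambda>j. real_of_int (binomZ (2*n+1) (int n - 3*j) - binomZ (2*n+1) (int n - 3*j - 1))
                          * q powi (int n ^ 2 + int n - 3 * j ^ 2 - 2 * j))"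

definition C :: "nat \<Rightarrow> real \<Rightarrow> real" where
  "C m q = (if even m then C_even (m div 2) q else C_odd (m div 2) q)"

text \<open>n x n matrices over 'a, represented as functions on indices 0..n-1, zero outside.\<close>
definition upper_sq_zero :: "nat \<Rightarrow> (nat \<Rightarrow> nat \<Rightarrow> 'a::field) set" where
  "upper_sq_zero n = {X. (\<forall>i j. (n \<le> i \<or> n \<le> j) \<longrightarrow> X i j = 0)
                       \<and> (\<forall>i<n. \<forall>j<n. j < i \<longrightarrow> X i j = 0)
                       \<and> (\<forall>i<n. \<forall>j<n. (\<Sum>k<n. X i k * X k j) = 0)}"

end

theory Submission
  imports Defs
begin


fun vv :: "real \<Rightarrow> nat \<Rightarrow> real \<Rightarrow> real" where
  "vv q 0 t = 1"
| "vv q (Suc 0) t = 1"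
| "vv q (Suc (Suc k)) t = vv q (Suc k) (q*t) - t * vv q k (q*t)"

lemma vv_R2:
  assumes q: "q \<noteq> 0"
  shows "vv q (Suc (Suc j)) t = vv q (Suc j) t - q^j * t * vv q j (t/q)"
proof (induction j arbitrary: t rule: less_induct)
  case (less j)
  show ?case
  proof (cases j)
    case 0 then show ?thesis by simp
  next
    case (Suc j1)
    show ?thesis
    proof (cases j1)
      case 0 then show ?thesis using Suc q by (simp add: algebra_simps)
    next
      case (Suc j2)
      have IH1: "vv q (Suc (Suc j1)) s = vv q (Suc j1) s - q^j1 * s * vv q j1 (s/q)" for s
        using less[of j1] \<open>j = Suc j1\<close> by simp
      have IH2: "vv q (Suc (Suc j2)) s = vv q (Suc j2) s - q^j2 * s * vv q j2 (s/q)" for s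
        using less[of j2] \<open>j = Suc j1\<close> \<open>j1 = Suc j2\<close> by simp
      have e1: "vv q (Suc (Suc j)) t = vv q (Suc j) (q*t) - t * vv q j (q*t)"
        using \<open>j = Suc j1\<close> by simp
      have e2: "vv q (Suc j) t = vv q j (q*t) - t * vv q j1 (q*t)"
        using \<open>j = Suc j1\<close> \<open>j1 = Suc j2\<close> by simp
      have e3: "vv q j (t/q) = vv q j1 t - (t/q) * vv q j2 t"
        using \<open>j = Suc j1\<close> \<open>j1 = Suc j2\<close> q by simp
      have a1: "vv q (Suc j) (q*t) = vv q j (q*t) - q^j1 * (q*t) * vv q j1 t"
        using IH1[of "q*t"] \<open>j = Suc j1\<close> q by simp
      have a2: "vv q j (q*t) = vv q j1 (q*t) - q^j2 * (q*t) * vv q j2 t"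
        using IH2[of "q*t"] \<open>j = Suc j1\<close> \<open>j1 = Suc j2\<close> q by simp
      show ?thesis unfolding e1 e2 e3 a1 a2
        using \<open>j = Suc j1\<close> \<open>j1 = Suc j2\<close> q
        by (simp add: algebra_simps)
    qed
  qed
qed

lemma vv_transfer:
  assumes q: "q \<noteq> 0"
  shows "q^(Suc k) * t * vv q (Suc k) (t/q) + (1-t) * vv q (Suc k) (q*t)
         = vv q (Suc (Suc k)) t + q^(Suc k) * t * vv q k t"
proof -
  have A: "vv q (Suc (Suc k)) t = vv q (Suc k) (q*t) - t * vv q k (q*t)" by simp
  have B: "vv q (Suc k) (q*t) - vv q k (q*t) = q^(Suc k) * (vv q (Suc k) (t/q) - vv q k t)"
  proof (cases k)
    case 0 then show ?thesis by simp
  next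
    case (Suc k1)
    have b1: "vv q (Suc k) (q*t) = vv q k (q*t) - q^k1 * (q*t) * vv q k1 t"
      using vv_R2[OF q, of k1 "q*t"] Suc q by simp
    have b2: "vv q (Suc k) (t/q) = vv q k t - (t/q) * vv q k1 t"
      using Suc q by simp
    show ?thesis unfolding b1 b2 using Suc q by (simp add: field_simps)
  qed
  have "t * (vv q (Suc k) (q*t) - vv q k (q*t)) = t * (q^(Suc k) * (vv q (Suc k) (t/q) - vv q k t))" using B by simp
  then show ?thesis unfolding A by (simp add: algebra_simps)
qed

lemma vv_transfer0: "q^0 * t * vv q 0 (t/q) + (1-t) * vv q 0 (q*t) = vv q 1 t"
  by simp

definition om :: "int \<Rightarrow> real" where
  "om u = (if u mod 6 = 1 \<or> u mod 6 = 2 then 1 else if u mod 6 = 4 \<or> u mod 6 = 5 then -1 else 0)"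

lemma om_shift3: "om (u + 3) = - om u"
  unfolding om_def by (auto simp: mod_simps) presburger+

lemma om_neg: "om (- u) = - om u"
  unfolding om_def by (auto simp: mod_simps) presburger+

lemma vv_step3:
  assumes q: "q \<noteq> 0"
  shows "vv q (Suc (Suc (Suc k))) 1 = -(q^(Suc k)) * vv q k 1"
proof -
  have "vv q (Suc (Suc (Suc k))) 1 = vv q (Suc (Suc k)) q - vv q (Suc k) q" by simp
  also have "vv q (Suc (Suc k)) q = vv q (Suc k) q - q^k * q * vv q k 1"
    using vv_R2[OF q, of k q] q by simp
  finally show ?thesis by simp
qed

lemma vv_one:
  assumes q: "q > 0"
  shows "vv q k 1 = om (int k + 1) * q powr (real k * (real k - 1) / 6)"
proof (induction k rule: less_induct)
  case (less k)
  show ?case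
  proof (cases "k < 3")
    case True
    then have "k = 0 \<or> k = 1 \<or> k = 2" by auto
    then show ?thesis using q by (auto simp: om_def numeral_2_eq_2)
  next
    case False
    then obtain j where k: "k = Suc (Suc (Suc j))" by (metis Suc_diff_Suc numeral_3_eq_3 not_less diff_Suc_Suc diff_zero less_Suc_eq_0_disj le_add_diff_inverse2 add_Suc_right add_0_right)
    have IH: "vv q j 1 = om (int j + 1) * q powr (real j * (real j - 1) / 6)"
      using less[of j] k by simp
    have "vv q k 1 = -(q^(Suc j)) * vv q j 1" using vv_step3[of q j] q k by simp
    also have "... = - om (int j + 1) * (q powr (real (Suc j)) * q powr (real j * (real j - 1) / 6))"
      using IH q powr_realpow[OF q, of "Suc j"] by (simp del: of_nat_Suc)
    also have "q powr (real (Suc j)) * q powr (real j * (real j - 1) / 6) = q powr (real k * (real k - 1) / 6)"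
      unfolding powr_add[symmetric] k by (simp add: field_simps)
    also have "- om (int j + 1) = om (int k + 1)" using om_shift3[of "int j + 1"] k by (simp add: add.commute)
    finally show ?thesis by simp
  qed
qed

fun NN :: "nat \<Rightarrow> int \<Rightarrow> real" where
  "NN 0 d = (if d = 0 then 1 else 0)"
| "NN (Suc m) d = NN m (d - 1) + NN m (d + 1)"

lemma NN_zero: "int m < \<bar>d\<bar> \<Longrightarrow> NN m d = 0"
  by (induction m arbitrary: d) auto

lemma NN_sym: "NN m (- d) = NN m d"
proof (induction m arbitrary: d)
  case 0 then show ?case by simp
next
  case (Suc m)
  have e1: "- d - 1 = -(d+1)" "- d + 1 = -(d - 1)" by simp_all
  have "NN m (- d - 1) = NN m (d + 1)" using Suc[of "d+1"] unfolding e1 .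
  moreover have "NN m (- d + 1) = NN m (d - 1)" using Suc[of "d - 1"] unfolding e1 .
  ultimately show ?case by simp
qed

lemma NN_supp: "NN m d \<noteq> 0 \<Longrightarrow> \<bar>d\<bar> \<le> int m"
  using NN_zero[of m d] by linarith

lemma sumZ_eq:
  assumes "finite S" "\<And>j. f j \<noteq> 0 \<Longrightarrow> j \<in> S"
  shows "sumZ f = (\<Sum>j\<in>S. f j)"
  unfolding sumZ_def
  by (rule sum.mono_neutral_left) (use assms in auto)

definition QQ :: "real \<Rightarrow> nat \<Rightarrow> int \<Rightarrow> real" where
  "QQ q m k = sumZ (\<lambda>u. NN m (u - k - 1) * om u * q powr ((3 * (real m + of_int k)^2 + 1 - (of_int u)^2) / 12))"

lemma QQ_eqS:
  assumes "finite S" "{k - int m - 1 .. k + int m + 1} \<subseteq> S"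
  shows "QQ q m k = (\<Sum>u\<in>S. NN m (u - k - 1) * om u * q powr ((3 * (real m + of_int k)^2 + 1 - (of_int u)^2) / 12))"
  unfolding QQ_def
proof (rule sumZ_eq[OF assms(1)])
  fix u assume "NN m (u - k - 1) * om u * q powr ((3 * (real m + of_int k)^2 + 1 - (of_int u)^2) / 12) \<noteq> 0"
  then have "\<bar>u - k - 1\<bar> \<le> int m" using NN_supp by fastforce
  then have "u \<in> {k - int m - 1 .. k + int m + 1}" by auto
  then show "u \<in> S" using assms(2) by blast
qed

lemma QQ_rec:
  assumes q: "q > 0"
  shows "QQ q (Suc m) k = QQ q m (k + 1) + q powr (real m + of_int k) * QQ q m (k - 1)"
proof -
  let ?S = "{k - int m - 4 .. k + int m + 4}"
  have e: "QQ q m' k' = (\<Sum>u\<in>?S. NN m' (u - k' - 1) * om u * q powr ((3 * (real m' + of_int k')^2 + 1 - (of_int u)^2) / 12))"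
    if "\<bar>k' - k\<bar> \<le> 1" "m' \<le> Suc m" for m' k'
    by (rule QQ_eqS) (use that in auto)
  have p: "q powr ((3 * (real (Suc m) + of_int k)^2 + 1 - (of_int u)^2) / 12)
      = q powr (real m + of_int k) * q powr ((3 * (real m + of_int (k - 1))^2 + 1 - (of_int u)^2) / 12)" for u
    unfolding powr_add[symmetric] by (simp add: field_simps power2_eq_square)
  have p2: "(3 * (real (Suc m) + of_int k)^2 + 1 - (of_int u)^2) / 12 = (3 * (real m + of_int (k + 1))^2 + 1 - (of_int u)^2) / 12" for u
    by (simp add: field_simps)
  have E1: "QQ q (Suc m) k = (\<Sum>u\<in>?S. NN (Suc m) (u - k - 1) * om u * q powr ((3 * (real (Suc m) + of_int k)^2 + 1 - (of_int u)^2) / 12))"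
    by (rule e) auto
  have E2: "QQ q m (k+1) = (\<Sum>u\<in>?S. NN m (u - (k+1) - 1) * om u * q powr ((3 * (real m + of_int (k+1))^2 + 1 - (of_int u)^2) / 12))"
    by (rule e) auto
  have E3: "QQ q m (k-1) = (\<Sum>u\<in>?S. NN m (u - (k-1) - 1) * om u * q powr ((3 * (real m + of_int (k-1))^2 + 1 - (of_int u)^2) / 12))"
    by (rule e) auto
  have pt: "NN (Suc m) (u - k - 1) * om u * q powr ((3 * (real (Suc m) + of_int k)^2 + 1 - (of_int u)^2) / 12)
     = NN m (u - (k+1) - 1) * om u * q powr ((3 * (real m + of_int (k+1))^2 + 1 - (of_int u)^2) / 12)
       + q powr (real m + of_int k) * (NN m (u - (k-1) - 1) * om u * q powr ((3 * (real m + of_int (k-1))^2 + 1 - (of_int u)^2) / 12))" for u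
  proof -
    have n1: "u - (k+1) - 1 = u - k - 1 - 1" "u - (k-1) - 1 = u - k - 1 + 1" by simp_all
    show ?thesis unfolding n1 NN.simps p2[of u, symmetric] p[of u] by (simp add: algebra_simps)
  qed
  show ?thesis unfolding E1 E2 E3 sum_distrib_left sum.distrib[symmetric]
    by (rule sum.cong[OF refl]) (rule pt)
qed

lemma QQ_m1: "QQ q m (-1) = 0"
proof -
  let ?f = "\<lambda>u. NN m u * om u * q powr ((3 * (real m - 1)^2 + 1 - (of_int u)^2) / 12)"
  let ?S = "{- int m - 3 .. int m + 3}"
  have h1: "QQ q m (-1) = (\<Sum>u\<in>?S. ?f u)"
    by (subst QQ_eqS[of ?S]) auto
  have "(\<Sum>u\<in>?S. ?f u) = (\<Sum>u\<in>?S. ?f (- u))"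
    by (rule sum.reindex_bij_witness[of _ uminus uminus]) auto
  also have "(\<Sum>u\<in>?S. ?f (- u)) = - (\<Sum>u\<in>?S. ?f u)"
    by (simp add: NN_sym om_neg sum_negf[symmetric])
  finally show ?thesis using h1 by simp
qed

lemma QQ_0:
  assumes q: "q > 0"
  shows "QQ q 0 (int k) = vv q k 1"
proof -
  have "QQ q 0 (int k) = (\<Sum>u\<in>{int k + 1}. NN 0 (u - int k - 1) * om u * q powr ((3 * (real 0 + of_int (int k))^2 + 1 - (of_int u)^2) / 12))"
    unfolding QQ_def by (rule sumZ_eq) (auto split: if_splits)
  also have "... = om (int k + 1) * q powr (real k * (real k - 1) / 6)"
  proof -
    have h: "q powr ((3 * (real k)^2 + 1 - (real k + 1)^2) / 12) = q powr (real k * (real k - 1) / 6)"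
      by (rule arg_cong[where f="(powr) q"]) (simp add: field_simps power2_eq_square)
    show ?thesis by (simp add: h)
  qed
  finally show ?thesis using vv_one[OF q] by simp
qed

lemma binomZ_alt: "binomZ N k = (if k < 0 then 0 else int (N choose nat k))"
  unfolding binomZ_def by (auto simp: binomial_eq_0)

lemma binomZ_pascal: "binomZ (Suc m) k = binomZ m k + binomZ m (k - 1)"
proof (cases "k \<le> 0")
  case True
  then show ?thesis unfolding binomZ_alt by (cases "k = 0") auto
next
  case False
  then have "nat k = Suc (nat (k - 1))" by simp
  then show ?thesis unfolding binomZ_alt using False by simp
qed

lemma NN_binom: "NN m d = (if even (int m - d) then real_of_int (binomZ m ((int m - d) div 2)) else 0)"
proof (induction m arbitrary: d)
  case 0
  show ?case by (auto simp: binomZ_def)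
next
  case (Suc m)
  show ?case
  proof (cases "even (int (Suc m) - d)")
    case True
    define k where "k = (int (Suc m) - d) div 2"
    have k1: "(int m - (d - 1)) div 2 = k" using True unfolding k_def by (auto elim!: evenE)
    have k2: "(int m - (d + 1)) div 2 = k - 1" using True unfolding k_def by (auto elim!: evenE)
    have p1: "even (int m - (d - 1))" "even (int m - (d+1))" using True by auto
    show ?thesis using True unfolding NN.simps Suc k1 k2 k_def[symmetric]
      by (auto simp add: p1 binomZ_pascal)
  next
    case False
    have p1: "\<not> even (int m - (d - 1))" "\<not> even (int m - (d+1))" using False by auto
    show ?thesis using False unfolding NN.simps Suc by (simp add: p1)
  qed
qed

lemma powr_conv: "q > 0 \<Longrightarrow> x = real_of_int z \<Longrightarrow> q powr x = q powi z"
  using powr_real_of_int'[of q z] by simp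

lemma om_6j1: "om (6*j+1) = 1"
proof - have "(6*j+1) mod 6 = 1" by presburger then show ?thesis unfolding om_def by simp qed
lemma om_6j2: "om (6*j+2) = 1"
proof - have "(6*j+2) mod 6 = 2" by presburger then show ?thesis unfolding om_def by simp qed
lemma om_m6j1: "om (-6*j-1) = -1"
proof - have "(-6*j-1) mod 6 = 5" by presburger then show ?thesis unfolding om_def by simp qed
lemma om_m6j2: "om (-6*j-2) = -1"
proof - have "(-6*j-2) mod 6 = 4" by presburger then show ?thesis unfolding om_def by simp qed

lemma binomZ_nz: "binomZ N k \<noteq> 0 \<Longrightarrow> 0 \<le> k \<and> k \<le> int N"
  unfolding binomZ_def by (auto split: if_splits)

lemma QQ0_split:
  assumes r: "(r = 1 \<and> even m) \<or> (r = 2 \<and> odd m)"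
  shows "QQ q m 0 = (\<Sum>j\<in>{-int m..int m}. NN m (6*j+r-1) * om (6*j+r) * q powr ((3 * (real m)^2 + 1 - (of_int (6*j+r))^2) / 12))
     + (\<Sum>j\<in>{-int m..int m}. NN m (-6*j-r-1) * om (-6*j-r) * q powr ((3 * (real m)^2 + 1 - (of_int (-6*j-r))^2) / 12))"
proof -
  define F where "F = (\<lambda>u. NN m (u - 1) * om u * q powr ((3 * (real m)^2 + 1 - (of_int u)^2) / 12))"
  define J where "J = {-int m..int m}"
  define A where "A = (\<lambda>j. 6*j+r) ` J"
  define B where "B = (\<lambda>j. -6*j-r) ` J"
  have "QQ q m 0 = sumZ F" unfolding QQ_def F_def by simp
  also have "sumZ F = (\<Sum>u\<in>A \<union> B. F u)"
  proof (rule sumZ_eq)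
    show "finite (A \<union> B)" unfolding A_def B_def J_def by simp
  next
    fix u assume "F u \<noteq> 0"
    then have n: "NN m (u - 1) \<noteq> 0" and o: "om u \<noteq> 0" unfolding F_def by auto
    have b: "\<bar>u - 1\<bar> \<le> int m" using NN_supp[OF n] .
    have e: "even (int m - (u - 1))" using n NN_binom[of m "u-1"] by (auto split: if_splits)
    have o2: "u mod 6 \<in> {1,2,4,5}" using o unfolding om_def by (auto split: if_splits)
    define j0 where "j0 = u div 6"
    have u6: "u = 6 * j0 + u mod 6" unfolding j0_def by simp
    have em: "even (int m) \<longleftrightarrow> even m" by simp
    have "\<exists>j. (u = 6*j+r \<or> u = -6*j-r) \<and> -int m \<le> j \<and> j \<le> int m"
    proof -
      consider "u mod 6 = 1" | "u mod 6 = 2" | "u mod 6 = 4" | "u mod 6 = 5" using o2 by auto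
      then show ?thesis
      proof cases
        case 1
        then have u: "u = 6*j0 + 1" using u6 by simp
        then have "even (int m)" using e by (simp add: even_diff) presburger?
        then have "r = 1" using r em by auto
        then show ?thesis using u b by (intro exI[of _ j0]) auto
      next
        case 2
        then have u: "u = 6*j0 + 2" using u6 by simp
        then have "odd (int m)" using e by simp presburger?
        then have "r = 2" using r em by auto
        then show ?thesis using u b by (intro exI[of _ j0]) auto
      next
        case 3
        then have u: "u = 6*j0 + 4" using u6 by simp
        then have "odd (int m)" using e by simp presburger?
        then have "r = 2" using r em by auto
        then show ?thesis using u b by (intro exI[of _ "-j0-1"]) auto
      next
        case 4
        then have u: "u = 6*j0 + 5" using u6 by simp
        then have "even (int m)" using e by simp presburger?
        then have "r = 1" using r em by auto
        then show ?thesis using u b by (intro exI[of _ "-j0-1"]) auto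
      qed
    qed
    then obtain j where "u = 6*j+r \<or> u = -6*j-r" "j \<in> J" unfolding J_def by auto
    then show "u \<in> A \<union> B" unfolding A_def B_def by auto
  qed
  also have "... = (\<Sum>u\<in>A. F u) + (\<Sum>u\<in>B. F u)"
  proof (rule sum.union_disjoint)
    show "finite A" "finite B" unfolding A_def B_def J_def by simp_all
    show "A \<inter> B = {}" unfolding A_def B_def using r by auto presburger+
  qed
  also have "(\<Sum>u\<in>A. F u) = (\<Sum>j\<in>J. F (6*j+r))"
    unfolding A_def by (rule sum.reindex_cong[where l="\<lambda>j. 6*j+r"]) (auto simp: inj_on_def)
  also have "(\<Sum>u\<in>B. F u) = (\<Sum>j\<in>J. F (-6*j-r))"
    unfolding B_def by (rule sum.reindex_cong[where l="\<lambda>j. -6*j-r"]) (auto simp: inj_on_def)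
  finally show ?thesis unfolding F_def J_def by (simp add: algebra_simps)
qed

lemma QQ_C_even:
  assumes q: "q > 0"
  shows "QQ q (2*n) 0 = C_even n q"
proof -
  let ?m = "2*n"
  let ?J = "{-int ?m..int ?m}"
  have "C_even n q = (\<Sum>j\<in>?J. real_of_int (binomZ (2*n) (int n - 3*j) - binomZ (2*n) (int n - 3*j - 1))
                          * q powi (int n ^ 2 - 3 * j ^ 2 - j))"
    unfolding C_even_def
  proof (rule sumZ_eq)
    fix j assume "real_of_int (binomZ (2*n) (int n - 3*j) - binomZ (2*n) (int n - 3*j - 1)) * q powi (int n ^ 2 - 3 * j ^ 2 - j) \<noteq> 0"
    then have "binomZ (2*n) (int n - 3*j) \<noteq> 0 \<or> binomZ (2*n) (int n - 3*j - 1) \<noteq> 0" by auto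
    then show "j \<in> ?J" by (auto dest!: binomZ_nz)
  qed simp
  also have "... = (\<Sum>j\<in>?J. NN ?m (6*j+1-1) * om (6*j+1) * q powr ((3 * (real ?m)^2 + 1 - (of_int (6*j+1))^2) / 12))
     + (\<Sum>j\<in>?J. NN ?m (-6*j-1-1) * om (-6*j-1) * q powr ((3 * (real ?m)^2 + 1 - (of_int (-6*j-1))^2) / 12))"
    unfolding sum.distrib[symmetric]
  proof (rule sum.cong[OF refl])
    fix j :: int
    have n1: "NN ?m (6*j+1-1) = binomZ (2*n) (int n - 3*j)"
      using NN_binom[of ?m "6*j"] by simp presburger?
    have a: "-6*j-1-1 = -(6*j+2)" by simp
    have b: "(int (2*n) - (6*j+2)) div 2 = int n - 3*j - 1" by simp
    have c: "even (int (2*n) - (6*j+2))" by simp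
    have n2: "NN ?m (-6*j-1-1) = binomZ (2*n) (int n - 3*j - 1)"
      unfolding a NN_sym NN_binom[of ?m "6*j+2"] b using c by simp
    have p1: "q powr ((3 * (real ?m)^2 + 1 - (of_int (6*j+1))^2) / 12) = q powi (int n ^ 2 - 3 * j ^ 2 - j)"
      by (rule powr_conv[OF q]) (simp add: field_simps power2_eq_square)
    have p2: "q powr ((3 * (real ?m)^2 + 1 - (of_int (-6*j-1))^2) / 12) = q powi (int n ^ 2 - 3 * j ^ 2 - j)"
      by (rule powr_conv[OF q]) (simp add: field_simps power2_eq_square)
    show "real_of_int (binomZ (2*n) (int n - 3*j) - binomZ (2*n) (int n - 3*j - 1)) * q powi (int n ^ 2 - 3 * j ^ 2 - j)
      = NN ?m (6*j+1-1) * om (6*j+1) * q powr ((3 * (real ?m)^2 + 1 - (of_int (6*j+1))^2) / 12)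
       + NN ?m (-6*j-1-1) * om (-6*j-1) * q powr ((3 * (real ?m)^2 + 1 - (of_int (-6*j-1))^2) / 12)"
      unfolding n1 n2 p1 p2 om_6j1 om_m6j1 by (simp add: algebra_simps)
  qed
  also have "... = QQ q ?m 0"
    using QQ0_split[of 1 ?m q] by simp
  finally show ?thesis ..
qed

lemma QQ_C_odd:
  assumes q: "q > 0"
  shows "QQ q (2*n+1) 0 = C_odd n q"
proof -
  let ?m = "2*n+1"
  let ?J = "{-int ?m..int ?m}"
  have "C_odd n q = (\<Sum>j\<in>?J. real_of_int (binomZ (2*n+1) (int n - 3*j) - binomZ (2*n+1) (int n - 3*j - 1))
                          * q powi (int n ^ 2 + int n - 3 * j ^ 2 - 2 * j))"
    unfolding C_odd_def
  proof (rule sumZ_eq)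
    fix j assume "real_of_int (binomZ (2*n+1) (int n - 3*j) - binomZ (2*n+1) (int n - 3*j - 1)) * q powi (int n ^ 2 + int n - 3 * j ^ 2 - 2 * j) \<noteq> 0"
    then have "binomZ (2*n+1) (int n - 3*j) \<noteq> 0 \<or> binomZ (2*n+1) (int n - 3*j - 1) \<noteq> 0" by auto
    then show "j \<in> ?J" by (auto dest!: binomZ_nz)
  qed simp
  also have "... = (\<Sum>j\<in>?J. NN ?m (6*j+2-1) * om (6*j+2) * q powr ((3 * (real ?m)^2 + 1 - (of_int (6*j+2))^2) / 12))
     + (\<Sum>j\<in>?J. NN ?m (-6*j-2-1) * om (-6*j-2) * q powr ((3 * (real ?m)^2 + 1 - (of_int (-6*j-2))^2) / 12))"
    unfolding sum.distrib[symmetric]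
  proof (rule sum.cong[OF refl])
    fix j :: int
    have n1: "NN ?m (6*j+2-1) = binomZ (2*n+1) (int n - 3*j)"
      using NN_binom[of ?m "6*j+1"] by simp presburger?
    have a: "-6*j-2-1 = -(6*j+3)" by simp
    have b: "(int (2*n+1) - (6*j+3)) div 2 = int n - 3*j - 1" by simp
    have c: "even (int (2*n+1) - (6*j+3))" by simp
    have n2: "NN ?m (-6*j-2-1) = binomZ (2*n+1) (int n - 3*j - 1)"
      unfolding a NN_sym NN_binom[of ?m "6*j+3"] b using c by simp
    have p1: "q powr ((3 * (real ?m)^2 + 1 - (of_int (6*j+2))^2) / 12) = q powi (int n ^ 2 + int n - 3 * j ^ 2 - 2 * j)"
      by (rule powr_conv[OF q]) (simp add: field_simps power2_eq_square)
    have p2: "q powr ((3 * (real ?m)^2 + 1 - (of_int (-6*j-2))^2) / 12) = q powi (int n ^ 2 + int n - 3 * j ^ 2 - 2 * j)"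
      by (rule powr_conv[OF q]) (simp add: field_simps power2_eq_square)
    show "real_of_int (binomZ (2*n+1) (int n - 3*j) - binomZ (2*n+1) (int n - 3*j - 1)) * q powi (int n ^ 2 + int n - 3 * j ^ 2 - 2 * j)
      = NN ?m (6*j+2-1) * om (6*j+2) * q powr ((3 * (real ?m)^2 + 1 - (of_int (6*j+2))^2) / 12)
       + NN ?m (-6*j-2-1) * om (-6*j-2) * q powr ((3 * (real ?m)^2 + 1 - (of_int (-6*j-2))^2) / 12)"
      unfolding n1 n2 p1 p2 om_6j2 om_m6j2 by (simp add: algebra_simps)
  qed
  also have "... = QQ q ?m 0"
    using QQ0_split[of 2 ?m q] by simp
  finally show ?thesis ..
qed

lemma QQ_C:
  assumes q: "q > 0"
  shows "QQ q m 0 = C m q"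
proof (cases "even m")
  case True
  then obtain n where "m = 2*n" by (auto elim!: evenE)
  then show ?thesis using QQ_C_even[OF q, of n] by (simp add: C_def)
next
  case False
  then obtain n where "m = 2*n+1" by (auto elim!: oddE)
  then show ?thesis using QQ_C_odd[OF q, of n] by (simp add: C_def)
qed



definition vecs :: "nat \<Rightarrow> (nat \<Rightarrow> 'a::zero) set" where
  "vecs m = {u. \<forall>i. m \<le> i \<longrightarrow> u i = 0}"

definition mv :: "nat \<Rightarrow> (nat \<Rightarrow> nat \<Rightarrow> 'a::field) \<Rightarrow> (nat \<Rightarrow> 'a) \<Rightarrow> nat \<Rightarrow> 'a" where
  "mv m Y u = (\<lambda>i. if i < m then (\<Sum>k<m. Y i k * u k) else 0)"

definition kerm :: "nat \<Rightarrow> (nat \<Rightarrow> nat \<Rightarrow> 'a::field) \<Rightarrow> (nat \<Rightarrow> 'a) set" where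
  "kerm m Y = {u \<in> vecs m. mv m Y u = (\<lambda>i. 0)}"

definition colm :: "nat \<Rightarrow> (nat \<Rightarrow> nat \<Rightarrow> 'a::field) \<Rightarrow> (nat \<Rightarrow> 'a) set" where
  "colm m Y = mv m Y ` vecs m"

definition extm :: "nat \<Rightarrow> (nat \<Rightarrow> nat \<Rightarrow> 'a::field) \<Rightarrow> (nat \<Rightarrow> 'a) \<Rightarrow> nat \<Rightarrow> nat \<Rightarrow> 'a" where
  "extm m Y u = (\<lambda>i j. if i < m \<and> j < m then Y i j else if i < m \<and> j = m then u i else 0)"

lemma mv_eq0_iff: "mv m Y u = (\<lambda>i. 0) \<longleftrightarrow> (\<forall>i<m. (\<Sum>k<m. Y i k * u k) = 0)"
  unfolding mv_def fun_eq_iff by auto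

lemma vecs_Suc_bij: "bij_betw (\<lambda>(u,c). u(m:=c)) (vecs m \<times> UNIV) (vecs (Suc m))"
  by (rule bij_betw_byWitness[where f'="\<lambda>w. (w(m:=0), w m)"]) (auto simp: vecs_def)

lemma vecs_finite_card: "finite (vecs m :: (nat \<Rightarrow> 'a::{finite,zero}) set) \<and> card (vecs m :: (nat \<Rightarrow> 'a) set) = card (UNIV :: 'a set) ^ m"
proof (induction m)
  case 0
  have "vecs 0 = {(\<lambda>i. 0 :: 'a)}" unfolding vecs_def by auto
  then show ?case by simp
next
  case (Suc m)
  have b: "bij_betw (\<lambda>(u,c). u(m:=c)) ((vecs m :: (nat \<Rightarrow> 'a) set) \<times> (UNIV :: 'a set)) (vecs (Suc m))" by (rule vecs_Suc_bij)
  have f: "finite ((vecs m :: (nat \<Rightarrow> 'a) set) \<times> (UNIV :: 'a set))" using Suc by (auto intro: finite_cartesian_product)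
  have "finite (vecs (Suc m) :: (nat \<Rightarrow> 'a) set)" using bij_betw_finite[OF b] f by simp
  moreover have "card (vecs (Suc m) :: (nat \<Rightarrow> 'a) set) = card (UNIV :: 'a set) ^ Suc m"
    using bij_betw_same_card[OF b] Suc by (simp add: card_cartesian_product mult.commute)
  ultimately show ?case by simp
qed

lemma vecs_finite: "finite (vecs m :: (nat \<Rightarrow> 'a::{finite,zero}) set)"
  using vecs_finite_card by blast

lemma vecs_card: "card (vecs m :: (nat \<Rightarrow> 'a::{finite,zero}) set) = card (UNIV :: 'a set) ^ m"
  using vecs_finite_card by blast

lemma mv_add: "mv m Y (\<lambda>i. u i + v i) = (\<lambda>i. mv m Y u i + mv m Y v i)"
  unfolding mv_def by (auto simp: fun_eq_iff sum.distrib distrib_left)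

lemma mv_diff: "mv m Y (\<lambda>i. u i - v i) = (\<lambda>i. mv m Y u i - mv m Y v i)"
  unfolding mv_def by (auto simp: fun_eq_iff sum_subtractf right_diff_distrib)

lemma mv_vecs: "mv m Y u \<in> vecs m"
  unfolding mv_def vecs_def by auto

lemma card_col_ker:
  fixes Y :: "nat \<Rightarrow> nat \<Rightarrow> 'a::{finite,field}"
  shows "card (colm m Y) * card (kerm m Y) = card (UNIV :: 'a set) ^ m"
proof -
  have fin: "finite (vecs m :: (nat \<Rightarrow> 'a) set)" by (rule vecs_finite)
  have "card (vecs m :: (nat \<Rightarrow> 'a) set) = (\<Sum>c\<in>colm m Y. card {u \<in> vecs m. mv m Y u = c})"
    unfolding colm_def card_eq_sum
    by (rule sum.image_gen[OF fin])
  also have "... = (\<Sum>c\<in>colm m Y. card (kerm m Y))"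
  proof (rule sum.cong[OF refl])
    fix c assume "c \<in> colm m Y"
    then obtain u0 where u0: "u0 \<in> vecs m" "c = mv m Y u0" unfolding colm_def by auto
    have "bij_betw (\<lambda>w i. w i + u0 i) (kerm m Y) {u \<in> vecs m. mv m Y u = c}"
    proof (rule bij_betw_byWitness[where f'="\<lambda>w i. w i - u0 i"])
      show "(\<lambda>w i. w i + u0 i) ` kerm m Y \<subseteq> {u \<in> vecs m. mv m Y u = c}"
        using u0 by (auto simp: kerm_def mv_add vecs_def)
      show "(\<lambda>w i. w i - u0 i) ` {u \<in> vecs m. mv m Y u = c} \<subseteq> kerm m Y"
        using u0 by (auto simp: kerm_def mv_diff vecs_def)
    qed auto
    then show "card {u \<in> vecs m. mv m Y u = c} = card (kerm m Y)"
      by (simp add: bij_betw_same_card)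
  qed
  finally show ?thesis using vecs_card[where 'a='a, of m] by simp
qed

lemma col_sub_ker:
  fixes Y :: "nat \<Rightarrow> nat \<Rightarrow> 'a::field"
  assumes Y: "Y \<in> upper_sq_zero m"
  shows "colm m Y \<subseteq> kerm m Y"
proof
  fix c assume "c \<in> colm m Y"
  then obtain w where w: "c = mv m Y w" unfolding colm_def by auto
  have sq: "\<And>i j. i < m \<Longrightarrow> j < m \<Longrightarrow> (\<Sum>k<m. Y i k * Y k j) = 0"
    using Y unfolding upper_sq_zero_def by auto
  have "(\<Sum>k<m. Y i k * c k) = 0" if "i < m" for i
  proof -
    have "(\<Sum>k<m. Y i k * c k) = (\<Sum>k<m. Y i k * (\<Sum>l<m. Y k l * w l))"
      unfolding w mv_def by (rule sum.cong) auto
    also have "... = (\<Sum>k<m. \<Sum>l<m. Y i k * Y k l * w l)"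
      by (simp add: sum_distrib_left mult.assoc)
    also have "... = (\<Sum>l<m. \<Sum>k<m. Y i k * Y k l * w l)"
      by (rule sum.swap)
    also have "... = (\<Sum>l<m. (\<Sum>k<m. Y i k * Y k l) * w l)"
      by (simp add: sum_distrib_right)
    also have "... = 0" using sq that by simp
    finally show ?thesis .
  qed
  then show "c \<in> kerm m Y" unfolding kerm_def mv_eq0_iff using w mv_vecs by auto
qed

lemma usz_iff: "X \<in> upper_sq_zero n \<longleftrightarrow> (\<forall>i j. (n \<le> i \<or> n \<le> j) \<longrightarrow> X i j = 0)
                       \<and> (\<forall>i<n. \<forall>j<n. j < i \<longrightarrow> X i j = 0)
                       \<and> (\<forall>i<n. \<forall>j<n. (\<Sum>k<n. X i k * X k j) = 0)"
  unfolding upper_sq_zero_def by simp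

definition trunc :: "nat \<Rightarrow> (nat \<Rightarrow> nat \<Rightarrow> 'a::field) \<Rightarrow> (nat \<Rightarrow> nat \<Rightarrow> 'a) \<times> (nat \<Rightarrow> 'a)" where
  "trunc m X = ((\<lambda>i j. if i < m \<and> j < m then X i j else 0), (\<lambda>i. if i < m then X i m else 0))"

lemma extm_in:
  fixes Y :: "nat \<Rightarrow> nat \<Rightarrow> 'a::field"
  assumes Y: "Y \<in> upper_sq_zero m" and u: "u \<in> kerm m Y"
  shows "extm m Y u \<in> upper_sq_zero (Suc m)"
proof -
  let ?E = "extm m Y u"
  have Y1: "\<And>i j. (m \<le> i \<or> m \<le> j) \<Longrightarrow> Y i j = 0"
   and Y2: "\<And>i j. i < m \<Longrightarrow> j < m \<Longrightarrow> j < i \<Longrightarrow> Y i j = 0"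
   and Y3: "\<And>i j. i < m \<Longrightarrow> j < m \<Longrightarrow> (\<Sum>k<m. Y i k * Y k j) = 0"
    using Y unfolding usz_iff by blast+
  have u1: "\<And>i. m \<le> i \<Longrightarrow> u i = 0" and u2: "\<And>i. i < m \<Longrightarrow> (\<Sum>k<m. Y i k * u k) = 0"
    using u unfolding kerm_def vecs_def mv_eq0_iff by auto
  have sq: "(\<Sum>k<Suc m. ?E i k * ?E k j) = 0" if "i < Suc m" "j < Suc m" for i j
  proof -
    have "(\<Sum>k<Suc m. ?E i k * ?E k j) = (\<Sum>k<m. ?E i k * ?E k j) + ?E i m * ?E m j" by simp
    also have "?E m j = 0" unfolding extm_def by simp
    also have "(\<Sum>k<m. ?E i k * ?E k j) = 0"
    proof (cases "i < m")
      case False then show ?thesis unfolding extm_def by simp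
    next
      case True
      show ?thesis
      proof (cases "j < m")
        case True
        have "(\<Sum>k<m. ?E i k * ?E k j) = (\<Sum>k<m. Y i k * Y k j)"
          using \<open>i < m\<close> True unfolding extm_def by (intro sum.cong) auto
        then show ?thesis using Y3 \<open>i < m\<close> True by simp
      next
        case False
        then have "j = m" using that by simp
        have "(\<Sum>k<m. ?E i k * ?E k j) = (\<Sum>k<m. Y i k * u k)"
          using \<open>i < m\<close> \<open>j = m\<close> unfolding extm_def by (intro sum.cong) auto
        then show ?thesis using u2 \<open>i < m\<close> by simp
      qed
    qed
    finally show ?thesis by simp
  qed
  show ?thesis unfolding usz_iff
  proof (intro conjI allI impI)
    fix i j assume "Suc m \<le> i \<or> Suc m \<le> j" then show "?E i j = 0" unfolding extm_def by auto
  next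
    fix i j assume "i < Suc m" "j < Suc m" "j < i" then show "?E i j = 0" unfolding extm_def using Y2 by auto
  next
    fix i j assume "i < Suc m" "j < Suc m" then show "(\<Sum>k<Suc m. ?E i k * ?E k j) = 0" by (rule sq)
  qed
qed

lemma trunc_in:
  fixes X :: "nat \<Rightarrow> nat \<Rightarrow> 'a::field"
  assumes X: "X \<in> upper_sq_zero (Suc m)"
  shows "fst (trunc m X) \<in> upper_sq_zero m \<and> snd (trunc m X) \<in> kerm m (fst (trunc m X))
         \<and> extm m (fst (trunc m X)) (snd (trunc m X)) = X"
proof -
  have X1: "\<And>i j. (Suc m \<le> i \<or> Suc m \<le> j) \<Longrightarrow> X i j = 0"
   and X2: "\<And>i j. i < Suc m \<Longrightarrow> j < Suc m \<Longrightarrow> j < i \<Longrightarrow> X i j = 0"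
   and X3: "\<And>i j. i < Suc m \<Longrightarrow> j < Suc m \<Longrightarrow> (\<Sum>k<Suc m. X i k * X k j) = 0"
    using X unfolding usz_iff by blast+
  have Xmm: "X m m = 0"
  proof -
    have "(\<Sum>k<Suc m. X m k * X k m) = (\<Sum>k<m. X m k * X k m) + X m m * X m m" by simp
    also have "(\<Sum>k<m. X m k * X k m) = 0" using X2 by (intro sum.neutral) auto
    finally have "X m m * X m m = 0" using X3[of m m] by simp
    then show ?thesis by simp
  qed
  have sq: "(\<Sum>k<m. X i k * X k j) = 0" if "i < m" "j \<le> m" for i j
  proof -
    have "(\<Sum>k<Suc m. X i k * X k j) = (\<Sum>k<m. X i k * X k j) + X i m * X m j" by simp
    moreover have "X m j = 0" using that X2[of m j] Xmm by (cases "j = m") auto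
    ultimately show ?thesis using X3[of i j] that by simp
  qed
  define Y where "Y = fst (trunc m X)"
  define u where "u = snd (trunc m X)"
  have Yd: "Y = (\<lambda>i j. if i < m \<and> j < m then X i j else 0)" and ud: "u = (\<lambda>i. if i < m then X i m else 0)"
    unfolding Y_def u_def trunc_def by simp_all
  have "Y \<in> upper_sq_zero m" unfolding usz_iff
  proof (intro conjI allI impI)
    fix i j assume "m \<le> i \<or> m \<le> j" then show "Y i j = 0" unfolding Yd by auto
  next
    fix i j assume "i < m" "j < m" "j < i" then show "Y i j = 0" unfolding Yd using X2 by auto
  next
    fix i j assume a: "i < m" "j < m"
    have "(\<Sum>k<m. Y i k * Y k j) = (\<Sum>k<m. X i k * X k j)" unfolding Yd using a by (intro sum.cong) auto
    then show "(\<Sum>k<m. Y i k * Y k j) = 0" using sq[of i j] a by simp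
  qed
  moreover have "u \<in> kerm m Y" unfolding kerm_def vecs_def mv_eq0_iff
  proof (intro CollectI conjI allI impI)
    fix i assume "m \<le> i" then show "u i = 0" unfolding ud by simp
  next
    fix i assume a: "i < m"
    have "(\<Sum>k<m. Y i k * u k) = (\<Sum>k<m. X i k * X k m)" unfolding Yd ud using a by (intro sum.cong) auto
    then show "(\<Sum>k<m. Y i k * u k) = 0" using sq[of i m] a by simp
  qed
  moreover have "extm m Y u = X"
  proof (intro ext)
    fix i j show "extm m Y u i j = X i j"
      unfolding extm_def Yd ud using X1[of i j] X2[of i j] Xmm
      by (cases "i < m"; cases "j < m"; cases "i = m"; cases "j = m"; auto)
  qed
  ultimately show ?thesis unfolding Y_def u_def by simp
qed

lemma usz_Suc_bij:
  "bij_betw (\<lambda>(Y,u). extm m Y u) (SIGMA Y:upper_sq_zero m. kerm m Y) (upper_sq_zero (Suc m) :: (nat \<Rightarrow> nat \<Rightarrow> 'a::field) set)"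
proof (rule bij_betw_byWitness[where f'="trunc m"], goal_cases)
  case 1
  show ?case
  proof
    fix a assume "a \<in> (SIGMA Y:(upper_sq_zero m :: (nat \<Rightarrow> nat \<Rightarrow> 'a) set). kerm m Y)"
    then obtain Y u where a: "a = (Y,u)" "Y \<in> upper_sq_zero m" "u \<in> kerm m Y" by auto
    have Y1: "\<And>i j. (m \<le> i \<or> m \<le> j) \<Longrightarrow> Y i j = 0" using a(2) unfolding usz_iff by blast
    have u1: "\<And>i. m \<le> i \<Longrightarrow> u i = 0" using a(3) unfolding kerm_def vecs_def by auto
    have "trunc m (extm m Y u) = (Y, u)"
      unfolding trunc_def extm_def using Y1 u1 by (auto simp: fun_eq_iff not_less)
    then show "trunc m ((\<lambda>(Y,u). extm m Y u) a) = a" using a by simp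
  qed
next
  case 2 show ?case
    using trunc_in by (auto simp: case_prod_beta)
next
  case 3 show ?case
    using extm_in by auto
next
  case 4 show ?case
  proof
    fix p assume "p \<in> trunc m ` (upper_sq_zero (Suc m) :: (nat \<Rightarrow> nat \<Rightarrow> 'a) set)"
    then obtain X where X: "X \<in> upper_sq_zero (Suc m)" "p = trunc m X" by auto
    show "p \<in> (SIGMA Y:upper_sq_zero m. kerm m Y)"
      using trunc_in[OF X(1)] X(2) by (metis SigmaI prod.collapse)
  qed
qed

lemma kerm_ext_iff:
  "w \<in> kerm (Suc m) (extm m Y u) \<longleftrightarrow> w \<in> vecs (Suc m) \<and> (\<forall>i<m. (\<Sum>k<m. Y i k * w k) + u i * w m = 0)"
proof -
  have "(\<Sum>k<Suc m. extm m Y u i k * w k) = (if i < m then (\<Sum>k<m. Y i k * w k) + u i * w m else 0)" for i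
  proof (cases "i < m")
    case True
    have "(\<Sum>k<Suc m. extm m Y u i k * w k) = (\<Sum>k<m. extm m Y u i k * w k) + extm m Y u i m * w m" by simp
    also have "(\<Sum>k<m. extm m Y u i k * w k) = (\<Sum>k<m. Y i k * w k)"
      using True unfolding extm_def by (intro sum.cong) auto
    finally show ?thesis using True unfolding extm_def by simp
  next
    case False then show ?thesis unfolding extm_def by simp
  qed
  then show ?thesis unfolding kerm_def mv_eq0_iff
    by (auto simp: less_Suc_eq)
qed

lemma kerm_iff: "w \<in> kerm m Y \<longleftrightarrow> w \<in> vecs m \<and> (\<forall>i<m. (\<Sum>k<m. Y i k * w k) = 0)"
  unfolding kerm_def mv_eq0_iff by simp


lemma ker_ext_notcol:
  fixes Y :: "nat \<Rightarrow> nat \<Rightarrow> 'a::field"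
  assumes u: "u \<in> vecs m" and nc: "u \<notin> colm m Y"
  shows "kerm (Suc m) (extm m Y u) = kerm m Y"
proof (intro set_eqI iffI)
  fix w assume w: "w \<in> kerm (Suc m) (extm m Y u)"
  then have wv: "w \<in> vecs (Suc m)" and wk: "\<And>i. i < m \<Longrightarrow> (\<Sum>k<m. Y i k * w k) + u i * w m = 0"
    unfolding kerm_ext_iff by auto
  have wm: "w m = 0"
  proof (rule ccontr)
    assume c: "w m \<noteq> 0"
    define w' where "w' = (\<lambda>k. if k < m then - w k / w m else 0)"
    have "w' \<in> vecs m" unfolding w'_def vecs_def by auto
    moreover have "mv m Y w' = u"
    proof (rule ext)
      fix i show "mv m Y w' i = u i"
      proof (cases "i < m")
        case True
        have "(\<Sum>k<m. Y i k * w' k) = - (\<Sum>k<m. Y i k * w k) / w m"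
          unfolding w'_def by (simp add: sum_divide_distrib sum_negf)
        also have "... = u i"
        proof -
          have h: "- (\<Sum>k<m. Y i k * w k) = u i * w m" using wk[OF True] by (rule add.inverse_unique)
          have "- (\<Sum>k<m. Y i k * w k) / w m = u i * w m / w m" by (simp only: h)
          also have "... = u i" using c by (rule nonzero_mult_div_cancel_right)
          finally show ?thesis .
        qed
        finally show ?thesis unfolding mv_def using True by simp
      next
        case False then show ?thesis using u unfolding mv_def vecs_def by simp
      qed
    qed
    ultimately have "u \<in> colm m Y" unfolding colm_def by auto
    then show False using nc by simp
  qed
  have "w \<in> vecs m" unfolding vecs_def
  proof (intro CollectI allI impI)
    fix i assume "m \<le> i"
    then show "w i = 0" using wv wm unfolding vecs_def by (cases "i = m") auto
  qed
  then show "w \<in> kerm m Y" unfolding kerm_iff using wk wm by simp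
next
  fix w assume "w \<in> kerm m Y"
  then have "w \<in> vecs m" "\<And>i. i < m \<Longrightarrow> (\<Sum>k<m. Y i k * w k) = 0" unfolding kerm_iff by auto
  then show "w \<in> kerm (Suc m) (extm m Y u)" unfolding kerm_ext_iff vecs_def by auto
qed


lemma ker_ext_col:
  fixes Y :: "nat \<Rightarrow> nat \<Rightarrow> 'a::{finite,field}"
  assumes c: "u \<in> colm m Y"
  shows "card (kerm (Suc m) (extm m Y u)) = card (kerm m Y) * card (UNIV :: 'a set)"
proof -
  obtain u0 where u0: "u0 \<in> vecs m" "u = mv m Y u0" using c unfolding colm_def by auto
  have ui: "u i = (\<Sum>k<m. Y i k * u0 k)" if "i < m" for i using u0 that unfolding mv_def by simp
  have u0m: "\<And>i. m \<le> i \<Longrightarrow> u0 i = 0" using u0 unfolding vecs_def by auto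
  define f where "f = (\<lambda>(z::nat \<Rightarrow> 'a, c::'a). (\<lambda>i. if i = m then c else z i - c * u0 i))"
  define g where "g = (\<lambda>w::nat \<Rightarrow> 'a. ((\<lambda>i. if i < m then w i + w m * u0 i else 0), w m))"
  have "bij_betw f (kerm m Y \<times> UNIV) (kerm (Suc m) (extm m Y u))"
  proof (rule bij_betw_byWitness[where f'=g], goal_cases)
    case 1 show ?case
    proof
      fix a assume "a \<in> kerm m Y \<times> (UNIV :: 'a set)"
      then obtain z c where a: "a = (z,c)" "z \<in> kerm m Y" by auto
      have zm: "\<And>i. m \<le> i \<Longrightarrow> z i = 0" using a(2) unfolding kerm_iff vecs_def by auto
      show "g (f a) = a" unfolding a f_def g_def using zm by (auto simp: fun_eq_iff not_less)
    qed
  next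
    case 2 show ?case
    proof
      fix w assume "w \<in> kerm (Suc m) (extm m Y u)"
      then have "w \<in> vecs (Suc m)" unfolding kerm_ext_iff by auto
      then have wz: "\<And>i. m < i \<Longrightarrow> w i = 0" unfolding vecs_def by auto
      show "f (g w) = w"
      proof
        fix i show "f (g w) i = w i"
          unfolding f_def g_def using u0m[of i] wz[of i] by (cases "i < m"; cases "i = m") auto
      qed
    qed
  next
    case 3 show ?case
    proof
      fix w assume "w \<in> f ` (kerm m Y \<times> UNIV)"
      then obtain z c where a: "w = f (z,c)" "z \<in> kerm m Y" by auto
      have zm: "\<And>i. m \<le> i \<Longrightarrow> z i = 0" and zk: "\<And>i. i < m \<Longrightarrow> (\<Sum>k<m. Y i k * z k) = 0"
        using a(2) unfolding kerm_iff vecs_def by auto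
      have "w \<in> vecs (Suc m)" unfolding a f_def vecs_def using zm u0m by auto
      moreover have "(\<Sum>k<m. Y i k * w k) + u i * w m = 0" if "i < m" for i
      proof -
        have "(\<Sum>k<m. Y i k * w k) = (\<Sum>k<m. Y i k * z k) - c * (\<Sum>k<m. Y i k * u0 k)"
          unfolding a f_def by (simp add: sum_subtractf right_diff_distrib sum_distrib_left algebra_simps)
        then show ?thesis using zk[OF that] ui[OF that] unfolding a f_def by simp
      qed
      ultimately show "w \<in> kerm (Suc m) (extm m Y u)" unfolding kerm_ext_iff by auto
    qed
  next
    case 4 show ?case
    proof
      fix p assume "p \<in> g ` kerm (Suc m) (extm m Y u)"
      then obtain w where a: "p = g w" "w \<in> kerm (Suc m) (extm m Y u)" by auto
      have wk: "\<And>i. i < m \<Longrightarrow> (\<Sum>k<m. Y i k * w k) + u i * w m = 0" using a(2) unfolding kerm_ext_iff by auto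
      have "fst (g w) \<in> kerm m Y" unfolding kerm_iff
      proof
        show "fst (g w) \<in> vecs m" unfolding g_def vecs_def by simp
        show "\<forall>i<m. (\<Sum>k<m. Y i k * fst (g w) k) = 0"
        proof (intro allI impI)
          fix i assume i: "i < m"
          have "(\<Sum>k<m. Y i k * fst (g w) k) = (\<Sum>k<m. Y i k * w k) + w m * (\<Sum>k<m. Y i k * u0 k)"
            unfolding g_def by (simp add: sum.distrib distrib_left sum_distrib_left algebra_simps)
          then show "(\<Sum>k<m. Y i k * fst (g w) k) = 0" using wk[OF i] ui[OF i] by (simp add: algebra_simps)
        qed
      qed
      then show "p \<in> kerm m Y \<times> UNIV" using a(1) by (cases "g w") auto
    qed
  qed
  then have "card (kerm m Y \<times> (UNIV :: 'a set)) = card (kerm (Suc m) (extm m Y u))" by (rule bij_betw_same_card)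
  then show ?thesis by (simp add: card_cartesian_product)
qed



lemma usz_zero: "upper_sq_zero 0 = {(\<lambda>i j. 0 :: 'a::field)}"
  unfolding upper_sq_zero_def by auto

lemma usz_finite: "finite (upper_sq_zero m :: (nat \<Rightarrow> nat \<Rightarrow> 'a::{finite,field}) set)"
proof (induction m)
  case 0 then show ?case by (simp add: usz_zero)
next
  case (Suc m)
  have "finite (SIGMA Y:(upper_sq_zero m :: (nat \<Rightarrow> nat \<Rightarrow> 'a) set). kerm m Y)"
  proof (rule finite_SigmaI[OF Suc])
    fix Y :: "nat \<Rightarrow> nat \<Rightarrow> 'a"
    show "finite (kerm m Y)" by (rule finite_subset[OF _ vecs_finite]) (auto simp: kerm_def)
  qed
  then show ?case using bij_betw_finite[OF usz_Suc_bij[where 'a='a, of m]] by simp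
qed

lemma kerm_finite: "finite (kerm m (Y :: nat \<Rightarrow> nat \<Rightarrow> 'a::{finite,field}))"
  by (rule finite_subset[OF _ vecs_finite]) (auto simp: kerm_def)

lemma sum_step:
  fixes g :: "real \<Rightarrow> real"
  shows "(\<Sum>X\<in>(upper_sq_zero (Suc m) :: (nat \<Rightarrow> nat \<Rightarrow> 'a::{finite,field}) set). g (real (card (kerm (Suc m) X))))
    = (\<Sum>Y\<in>(upper_sq_zero m :: (nat \<Rightarrow> nat \<Rightarrow> 'a) set).
         real (card (colm m Y)) * g (real (card (UNIV :: 'a set)) * real (card (kerm m Y)))
         + (real (card (kerm m Y)) - real (card (colm m Y))) * g (real (card (kerm m Y))))"
proof -
  let ?q = "real (card (UNIV :: 'a set))"
  have "(\<Sum>X\<in>(upper_sq_zero (Suc m) :: (nat \<Rightarrow> nat \<Rightarrow> 'a) set). g (real (card (kerm (Suc m) X))))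
      = (\<Sum>p\<in>(SIGMA Y:(upper_sq_zero m :: (nat \<Rightarrow> nat \<Rightarrow> 'a) set). kerm m Y). g (real (card (kerm (Suc m) ((\<lambda>(Y,u). extm m Y u) p)))))"
    by (rule sum.reindex_bij_betw[OF usz_Suc_bij, symmetric])
  also have "... = (\<Sum>Y\<in>(upper_sq_zero m :: (nat \<Rightarrow> nat \<Rightarrow> 'a) set). \<Sum>u\<in>kerm m Y. g (real (card (kerm (Suc m) (extm m Y u)))))"
    by (subst sum.Sigma[OF usz_finite]) (auto simp: kerm_finite case_prod_beta intro!: sum.cong)
  also have "... = (\<Sum>Y\<in>(upper_sq_zero m :: (nat \<Rightarrow> nat \<Rightarrow> 'a) set).
         real (card (colm m Y)) * g (?q * real (card (kerm m Y)))
         + (real (card (kerm m Y)) - real (card (colm m Y))) * g (real (card (kerm m Y))))"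
  proof (rule sum.cong[OF refl])
    fix Y :: "nat \<Rightarrow> nat \<Rightarrow> 'a" assume Y: "Y \<in> upper_sq_zero m"
    have sub: "colm m Y \<subseteq> kerm m Y" by (rule col_sub_ker[OF Y])
    have fk: "finite (kerm m Y)" by (rule kerm_finite)
    have cd: "card (kerm m Y - colm m Y) = card (kerm m Y) - card (colm m Y)"
      by (rule card_Diff_subset[OF finite_subset[OF sub fk] sub])
    have cm: "card (colm m Y) \<le> card (kerm m Y)" by (rule card_mono[OF fk sub])
    have "(\<Sum>u\<in>kerm m Y. g (real (card (kerm (Suc m) (extm m Y u)))))
        = (\<Sum>u\<in>kerm m Y - colm m Y. g (real (card (kerm (Suc m) (extm m Y u)))))
          + (\<Sum>u\<in>colm m Y. g (real (card (kerm (Suc m) (extm m Y u)))))"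
      by (rule sum.subset_diff[OF sub fk])
    also have "(\<Sum>u\<in>kerm m Y - colm m Y. g (real (card (kerm (Suc m) (extm m Y u)))))
        = (\<Sum>u\<in>kerm m Y - colm m Y. g (real (card (kerm m Y))))"
    proof (rule sum.cong[OF refl])
      fix u assume u: "u \<in> kerm m Y - colm m Y"
      then have "u \<in> vecs m" by (auto simp: kerm_def)
      then show "g (real (card (kerm (Suc m) (extm m Y u)))) = g (real (card (kerm m Y)))"
        using ker_ext_notcol[of u m Y] u by simp
    qed
    also have "(\<Sum>u\<in>colm m Y. g (real (card (kerm (Suc m) (extm m Y u)))))
        = (\<Sum>u\<in>colm m Y. g (?q * real (card (kerm m Y))))"
    proof (rule sum.cong[OF refl])
      fix u assume u: "u \<in> colm m Y"
      show "g (real (card (kerm (Suc m) (extm m Y u)))) = g (?q * real (card (kerm m Y)))"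
        using ker_ext_col[OF u] by (simp add: mult.commute)
    qed
    also have "(\<Sum>u\<in>kerm m Y - colm m Y. g (real (card (kerm m Y)))) + (\<Sum>u\<in>colm m Y. g (?q * real (card (kerm m Y))))
        = real (card (colm m Y)) * g (?q * real (card (kerm m Y)))
         + (real (card (kerm m Y)) - real (card (colm m Y))) * g (real (card (kerm m Y)))"
      using cd cm by (simp add: of_nat_diff)
    finally show "(\<Sum>u\<in>kerm m Y. g (real (card (kerm (Suc m) (extm m Y u)))))
        = real (card (colm m Y)) * g (?q * real (card (kerm m Y)))
         + (real (card (kerm m Y)) - real (card (colm m Y))) * g (real (card (kerm m Y)))" .
  qed
  finally show ?thesis .
qed

lemma pt_alg0:
  fixes K R q t :: real
  shows "R * ((q*K)^0 * vv q 0 t) + (K - R) * (K^0 * vv q 0 t') = K^1 * vv q 1 t''"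
  by simp

lemma pt_alg:
  fixes K R q :: real
  assumes K: "K > 0" and q: "q > 0" and RK: "R * K = q^m"
  shows "R * ((q*K)^(Suc k) * vv q (Suc k) (q^(Suc m)/(q*K)^2)) + (K - R) * (K^(Suc k) * vv q (Suc k) (q^(Suc m)/K^2))
       = K^(Suc (Suc k)) * vv q (Suc (Suc k)) (q^m/K^2) + q^(Suc k + m) * (K^k * vv q k (q^m/K^2))"
proof -
  define t where "t = q^m / K^2"
  have R: "R = t * K" using RK K unfolding t_def by (simp add: field_simps power2_eq_square)
  have a1: "q^(Suc m)/(q*K)^2 = t/q" unfolding t_def using q K by (simp add: field_simps power2_eq_square)
  have a2: "q^(Suc m)/K^2 = q*t" unfolding t_def using q K by (simp add: field_simps power2_eq_square)
  have tK: "t * K^2 = q^m" unfolding t_def using K by simp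
  have "R * ((q*K)^(Suc k) * vv q (Suc k) (q^(Suc m)/(q*K)^2)) + (K - R) * (K^(Suc k) * vv q (Suc k) (q^(Suc m)/K^2))
      = K^(Suc (Suc k)) * (q^(Suc k) * t * vv q (Suc k) (t/q) + (1-t) * vv q (Suc k) (q*t))"
    unfolding R a1 a2 by (simp add: power_mult_distrib algebra_simps)
  also have "... = K^(Suc (Suc k)) * (vv q (Suc (Suc k)) t + q^(Suc k) * t * vv q k t)"
    using vv_transfer[of q k t] q by simp
  also have "... = K^(Suc (Suc k)) * vv q (Suc (Suc k)) t + q^(Suc k) * (t * K^2) * (K^k * vv q k t)"
    by (simp add: algebra_simps power2_eq_square)
  also have "... = K^(Suc (Suc k)) * vv q (Suc (Suc k)) t + q^(Suc k + m) * (K^k * vv q k t)"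
    unfolding tK by (simp add: power_add)
  finally show ?thesis unfolding t_def .
qed

lemma kerm_pos: "card (kerm m (Y :: nat \<Rightarrow> nat \<Rightarrow> 'a::{finite,field})) > 0"
proof -
  have "(\<lambda>i. 0) \<in> kerm m Y" unfolding kerm_def vecs_def mv_def by (auto simp: fun_eq_iff)
  then show ?thesis using kerm_finite card_gt_0_iff by blast
qed

lemma W_eq:
  fixes dummy :: "'a::{finite,field} itself"
  defines "q \<equiv> real (card (UNIV :: 'a set))"
  shows "\<forall>k. (\<Sum>Y\<in>(upper_sq_zero m :: (nat \<Rightarrow> nat \<Rightarrow> 'a) set).
            real (card (kerm m Y))^k * vv q k (q^m / real (card (kerm m Y))^2)) = QQ q m (int k)"
proof (induction m)
  have q: "q > 0" unfolding q_def by (simp add: card_gt_0_iff)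
  case 0
  have k0: "kerm 0 (\<lambda>i j. 0 :: 'a) = {\<lambda>i. 0}" unfolding kerm_def vecs_def mv_def by auto
  show ?case using QQ_0[OF q] by (simp add: usz_zero k0)
next
  have q: "q > 0" unfolding q_def by (simp add: card_gt_0_iff)
  case (Suc m)
  show ?case
  proof
    fix k
    let ?K = "\<lambda>Y. real (card (kerm m (Y :: nat \<Rightarrow> nat \<Rightarrow> 'a)))"
    let ?R = "\<lambda>Y. real (card (colm m (Y :: nat \<Rightarrow> nat \<Rightarrow> 'a)))"
    have RK: "?R Y * ?K Y = q^m" for Y
      using card_col_ker[of m Y] unfolding q_def by (metis of_nat_mult of_nat_power)
    have Kp: "?K Y > 0" for Y using kerm_pos[of m Y] by simp
    have step: "(\<Sum>X\<in>(upper_sq_zero (Suc m) :: (nat \<Rightarrow> nat \<Rightarrow> 'a) set).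
            real (card (kerm (Suc m) X))^k * vv q k (q^(Suc m) / real (card (kerm (Suc m) X))^2))
        = (\<Sum>Y\<in>(upper_sq_zero m :: (nat \<Rightarrow> nat \<Rightarrow> 'a) set).
            ?R Y * ((q * ?K Y)^k * vv q k (q^(Suc m) / (q * ?K Y)^2))
            + (?K Y - ?R Y) * (?K Y^k * vv q k (q^(Suc m) / ?K Y^2)))"
      using sum_step[where 'a='a, of "\<lambda>x. x^k * vv q k (q^(Suc m) / x^2)" m] unfolding q_def by simp
    show "(\<Sum>X\<in>(upper_sq_zero (Suc m) :: (nat \<Rightarrow> nat \<Rightarrow> 'a) set).
            real (card (kerm (Suc m) X))^k * vv q k (q^(Suc m) / real (card (kerm (Suc m) X))^2)) = QQ q (Suc m) (int k)"
    proof (cases k)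
      case 0
      have "(\<Sum>Y\<in>(upper_sq_zero m :: (nat \<Rightarrow> nat \<Rightarrow> 'a) set).
            ?R Y * ((q * ?K Y)^k * vv q k (q^(Suc m) / (q * ?K Y)^2))
            + (?K Y - ?R Y) * (?K Y^k * vv q k (q^(Suc m) / ?K Y^2)))
          = (\<Sum>Y\<in>(upper_sq_zero m :: (nat \<Rightarrow> nat \<Rightarrow> 'a) set). ?K Y^1 * vv q 1 (q^m / ?K Y^2))"
        unfolding 0 by (intro sum.cong refl) simp
      also have "... = QQ q m 1" using Suc.IH[rule_format, of 1] by simp
      also have "... = QQ q (Suc m) 0" using QQ_rec[OF q, of m 0] QQ_m1[of q m] by simp
      finally show ?thesis using step 0 by simp
    next
      case (Suc k')
      have "(\<Sum>Y\<in>(upper_sq_zero m :: (nat \<Rightarrow> nat \<Rightarrow> 'a) set).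
            ?R Y * ((q * ?K Y)^k * vv q k (q^(Suc m) / (q * ?K Y)^2))
            + (?K Y - ?R Y) * (?K Y^k * vv q k (q^(Suc m) / ?K Y^2)))
          = (\<Sum>Y\<in>(upper_sq_zero m :: (nat \<Rightarrow> nat \<Rightarrow> 'a) set).
             ?K Y^(Suc (Suc k')) * vv q (Suc (Suc k')) (q^m / ?K Y^2) + q^(Suc k' + m) * (?K Y^k' * vv q k' (q^m / ?K Y^2)))"
        unfolding Suc by (intro sum.cong refl pt_alg[OF Kp q RK])
      also have "... = (\<Sum>Y\<in>(upper_sq_zero m :: (nat \<Rightarrow> nat \<Rightarrow> 'a) set).
             ?K Y^(Suc (Suc k')) * vv q (Suc (Suc k')) (q^m / ?K Y^2)) + q^(Suc k' + m) * (\<Sum>Y\<in>(upper_sq_zero m :: (nat \<Rightarrow> nat \<Rightarrow> 'a) set). ?K Y^k' * vv q k' (q^m / ?K Y^2))"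
        by (simp only: sum.distrib sum_distrib_left)
      also have "... = QQ q m (int (Suc (Suc k'))) + q^(Suc k' + m) * QQ q m (int k')"
        by (simp only: Suc.IH[rule_format, of "Suc (Suc k')"] Suc.IH[rule_format, of k'])
      also have "... = QQ q (Suc m) (int k)"
      proof -
        have e: "real m + of_int (int k) = real (Suc k' + m)" using Suc by simp
        have "q powr (real m + of_int (int k)) = q^(Suc k' + m)"
          unfolding e by (rule powr_realpow[OF q])
        then show ?thesis using QQ_rec[OF q, of m "int k"] Suc by (simp add: add.commute)
      qed
      finally show ?thesis using step by simp
    qed
  qed
qed

theorem mainTheorem1:
  fixes n :: nat
  assumes "n \<ge> 1"
  shows "real (card (upper_sq_zero n :: (nat \<Rightarrow> nat \<Rightarrow> 'a::{finite,field}) set))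
         = C n (real (card (UNIV :: 'a set)))"
proof -
  let ?q = "real (card (UNIV :: 'a set))"
  have q: "?q > 0" by (simp add: card_gt_0_iff)
  have "real (card (upper_sq_zero n :: (nat \<Rightarrow> nat \<Rightarrow> 'a) set))
      = (\<Sum>Y\<in>(upper_sq_zero n :: (nat \<Rightarrow> nat \<Rightarrow> 'a) set).
            real (card (kerm n Y))^0 * vv ?q 0 (?q^n / real (card (kerm n Y))^2))" by simp
  also have "... = QQ ?q n (int 0)" by (rule W_eq[where 'a='a, of n, rule_format])
  also have "... = QQ ?q n 0" by simp
  also have "... = C n ?q" by (rule QQ_C[OF q])
  finally show ?thesis .
qed

end
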